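(* Let $f:\mathbb{R}^\ell\times\mathbb{R}^m\to\mathbb{R}^\ell$ be $C^1$ and let $\Lambda:\mathbb{R}\to\mathbb{R}^m$ be a parameter shift with limits $\lambda_\pm$. Suppose $X:\mathbb{R}\to\mathbb{R}^\ell$ defines a stable path with endpoints $X_\pm$. Then for each $r>0$ there is a unique solution $\{x_n^r\}_{n\in\mathbb{Z}}$ of the nonautonomous map $x_{n+1}=f(x_n,\Lambda(rn))$ satisfying $\lim_{n\to-\infty}x_n^r=X_-$.
   Context: A parameter shift is a $C^1$ function $\Lambda:\mathbb{R}\to\mathbb{R}^m$ with $\lim_{s\to\pm\infty}\Lambda(s)=\lambda_\pm$ and $\lim_{s\to\pm\infty}\Lambda'(s)=0$. For $r>0$, a solution of the nonautonomous map $x_{n+1}=f(x_n,\Lambda(rn))$ is a sequence $\{x_n\}_{n\in\mathbb{Z}}$ in $\mathbb{R}^\ell$ satisfying this relation for all $n\in\mathbb{Z}$; the map $f(\cdot,\lambda)$ need not be invertible. For a square matrix $M$, $\rho(M)$ denotes its spectral radius. A stable path is given by $X:\mathbb{R}\to\mathbb{R}^\ell$ such that: for every $s$, $X(s)$ is a fixed point of $f(\cdot,\Lambda(s))$; the set $\{(s,X(s)):s\in\mathbb{R}\}$ is a connected curve; the limits $X_\pm=\lim_{s\to\pm\infty}X(s)$ exist and are fixed points of $f(\cdot,\lambda_\pm)$; and $\rho(D_xf(X(s),\Lambda(s)))<1$ for all $s\in\mathbb{R}\cup\{\pm\infty\}$, where $X(\pm\infty)=X_\pm$ and $\Lambda(\pm\infty)=\lambda_\pm$.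 *)

theory Defs
  imports "HOL-Analysis.Analysis"
begin

definition complex_eigenvalues :: "real^'n^'n \<Rightarrow> complex set" where
  "complex_eigenvalues A =
     {z. \<exists>v::complex^'n. v \<noteq> 0 \<and> (map_matrix complex_of_real A) *v v = z *s v}"

definition spectral_rad :: "real^'n^'n \<Rightarrow> real" where
  "spectral_rad A = Max (cmod ` complex_eigenvalues A)"

text \<open>Jacobian with respect to the state variable x of f at (x, lambda),
  where f' is the (total) Frechet derivative of f.\<close>
definition Dx :: "('a \<Rightarrow> ((real^'l) \<times> (real^'m)) \<Rightarrow>\<^sub>L (real^'l)) \<Rightarrow> 'a \<Rightarrow> real^'l^'l" where
  "Dx f' z = matrix (\<lambda>v. blinfun_apply (f' z) (v, 0))"

definition parameter_shift :: "(real \<Rightarrow> real^'m) \<Rightarrow> real^'m \<Rightarrow> real^'m \<Rightarrow> bool" where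
  "parameter_shift \<Lambda> lm lp \<longleftrightarrow>
     (\<exists>\<Lambda>'. (\<forall>s. (\<Lambda> has_vector_derivative \<Lambda>' s) (at s)) \<and> continuous_on UNIV \<Lambda>' \<and>
        (\<Lambda> \<longlongrightarrow> lm) at_bot \<and> (\<Lambda> \<longlongrightarrow> lp) at_top \<and>
        (\<Lambda>' \<longlongrightarrow> 0) at_bot \<and> (\<Lambda>' \<longlongrightarrow> 0) at_top)"

definition stable_path ::
  "((real^'l) \<times> (real^'m) \<Rightarrow> real^'l) \<Rightarrow> ((real^'l) \<times> (real^'m) \<Rightarrow> ((real^'l) \<times> (real^'m)) \<Rightarrow>\<^sub>L (real^'l))
   \<Rightarrow> (real \<Rightarrow> real^'m) \<Rightarrow> real^'m \<Rightarrow> real^'m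
   \<Rightarrow> (real \<Rightarrow> real^'l) \<Rightarrow> real^'l \<Rightarrow> real^'l \<Rightarrow> bool" where
  "stable_path f f' \<Lambda> lm lp X Xm Xp \<longleftrightarrow>
     (\<forall>s. f (X s, \<Lambda> s) = X s) \<and>
     connected {(s, X s) | s. True} \<and>
     (X \<longlongrightarrow> Xm) at_bot \<and> (X \<longlongrightarrow> Xp) at_top \<and>
     f (Xm, lm) = Xm \<and> f (Xp, lp) = Xp \<and>
     (\<forall>s. spectral_rad (Dx f' (X s, \<Lambda> s)) < 1) \<and>
     spectral_rad (Dx f' (Xm, lm)) < 1 \<and> spectral_rad (Dx f' (Xp, lp)) < 1"

end

theory Submission
  imports Defs "Jordan_Normal_Form.Spectral_Radius"
begin
no_notation vec_index (infixl "$" 100)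
no_notation scalar_prod (infix "\<bullet>" 70)

definition mpow :: "'a::semiring_1^'n^'n \<Rightarrow> nat \<Rightarrow> 'a^'n^'n" where
  "mpow A k = ((\<lambda>M. M ** A) ^^ k) (Finite_Cartesian_Product.mat 1)"

lemma mpow_0[simp]: "mpow A 0 = Finite_Cartesian_Product.mat 1" by (simp add: mpow_def)
lemma mpow_Suc[simp]: "mpow A (Suc k) = mpow A k ** A" by (simp add: mpow_def)

definition cm :: "(nat \<Rightarrow> 'n::finite) \<Rightarrow> 'a^'n^'n \<Rightarrow> 'a Matrix.mat" where
  "cm h M = Matrix.mat CARD('n) CARD('n) (\<lambda>(i,j). M $ h i $ h j)"

lemma cm_carrier: "cm (h::nat\<Rightarrow>'n::finite) M \<in> carrier_mat CARD('n) CARD('n)"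
  by (simp add: cm_def)

lemma dim_cm[simp]: "dim_row (cm (h::nat\<Rightarrow>'n::finite) M) = CARD('n)" "dim_col (cm (h::nat\<Rightarrow>'n::finite) M) = CARD('n)"
  by (simp_all add: cm_def)

lemma bij_ex: "bij_betw h {0..<CARD('n)} (UNIV::'n::finite set) \<Longrightarrow> \<exists>i. i < CARD('n) \<and> a = h i"
  unfolding bij_betw_def by (metis UNIV_I atLeastLessThan_iff imageE)

lemma reidx:
  assumes h: "bij_betw h {0..<CARD('n)} (UNIV::'n::finite set)"
  shows "(\<Sum>l\<in>{0..<CARD('n)}. g (h l)) = (\<Sum>b\<in>UNIV. (g b :: 'a::comm_monoid_add))"
  using sum.reindex_bij_betw[OF h] by simp

lemma cm_mult:
  assumes h: "bij_betw h {0..<CARD('n)} (UNIV::'n::finite set)"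
  shows "cm h ((M::'a::comm_semiring_1^'n^'n) ** N) = cm h M * cm h N"
proof (rule eq_matI)
  fix i j assume i: "i < dim_row (cm h M * cm h N)" and j: "j < dim_col (cm h M * cm h N)"
  then have i': "i < CARD('n)" and j': "j < CARD('n)" by (auto simp: cm_def)
  have "(cm h M * cm h N) $$ (i,j) = (\<Sum>l\<in>{0..<CARD('n)}. M $ h i $ h l * N $ h l $ h j)"
    using i' j' by (simp add: cm_def scalar_prod_def)
  also have "\<dots> = (\<Sum>b\<in>UNIV. M $ h i $ b * N $ b $ h j)"
    by (rule reidx[OF h])
  finally show "cm h (M ** N) $$ (i,j) = (cm h M * cm h N) $$ (i,j)"
    using i' j' by (simp add: cm_def matrix_matrix_mult_def)
qed (auto simp: cm_def)

lemma cm_one: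
  assumes h: "bij_betw h {0..<CARD('n)} (UNIV::'n::finite set)"
  shows "cm h (Finite_Cartesian_Product.mat 1 :: 'a::semiring_1^'n^'n) = 1\<^sub>m CARD('n)"
proof (rule eq_matI)
  fix i j assume "i < dim_row (1\<^sub>m CARD('n) :: 'a Matrix.mat)" "j < dim_col (1\<^sub>m CARD('n) :: 'a Matrix.mat)"
  then have i: "i < CARD('n)" and j: "j < CARD('n)" by auto
  have "h i = h j \<longleftrightarrow> i = j" using h i j unfolding bij_betw_def inj_on_def by auto
  then show "cm h (Finite_Cartesian_Product.mat 1 :: 'a::semiring_1^'n^'n) $$ (i, j) = 1\<^sub>m CARD('n) $$ (i, j)"
    using i j by (simp add: cm_def Finite_Cartesian_Product.mat_def)
qed (auto simp: cm_def)

lemma cm_pow: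
  assumes h: "bij_betw h {0..<CARD('n)} (UNIV::'n::finite set)"
  shows "cm h (mpow (M::'a::comm_semiring_1^'n^'n) k) = (cm h M) ^\<^sub>m k"
  by (induction k) (simp_all add: cm_one[OF h] cm_mult[OF h])

lemma cm_eig:
  assumes h: "bij_betw h {0..<CARD('n)} (UNIV::'n::finite set)"
    and ev: "eigenvalue (cm h (M::complex^'n^'n)) w"
  shows "\<exists>v. v \<noteq> 0 \<and> M *v v = w *s v"
proof -
  from ev obtain u where u: "u \<in> carrier_vec CARD('n)" "u \<noteq> 0\<^sub>v CARD('n)"
    and eq: "cm h M *\<^sub>v u = w \<cdot>\<^sub>v u"
    unfolding eigenvalue_def eigenvector_def by (auto simp: cm_def)
  define g where "g = inv_into {0..<CARD('n)} h"
  have gh: "g (h i) = i" if "i < CARD('n)" for i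
    using h that unfolding g_def bij_betw_def by (auto intro: inv_into_f_f)
  have hg: "h (g a) = a" "g a < CARD('n)" for a
  proof -
    obtain i where "i < CARD('n)" "a = h i" using bij_ex[OF h] by blast
    then show "h (g a) = a" "g a < CARD('n)" using gh by auto
  qed
  define v where "v = (\<chi> a. vec_index u (g a))"
  have vh: "v $ h i = vec_index u i" if "i < CARD('n)" for i
    using gh[OF that] by (simp add: v_def)
  have "v \<noteq> 0"
  proof
    assume "v = 0"
    then have "vec_index u i = 0" if "i < CARD('n)" for i using vh[OF that] by simp
    then have "u = 0\<^sub>v CARD('n)" using u(1) by (intro eq_vecI) auto
    with u(2) show False by simp
  qed
  moreover have "M *v v = w *s v"
  proof (rule Finite_Cartesian_Product.vec_eq_iff[THEN iffD2, rule_format])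
    fix a
    obtain i where i: "i < CARD('n)" "a = h i" using bij_ex[OF h] by blast
    have "(M *v v) $ a = (\<Sum>b\<in>UNIV. M $ h i $ b * v $ b)"
      by (simp add: matrix_vector_mult_def i)
    also have "\<dots> = (\<Sum>l\<in>{0..<CARD('n)}. M $ h i $ h l * v $ h l)"
      by (rule reidx[OF h, symmetric])
    also have "\<dots> = (\<Sum>l\<in>{0..<CARD('n)}. M $ h i $ h l * vec_index u l)"
      by (rule sum.cong) (auto simp: vh)
    also have "\<dots> = vec_index (cm h M *\<^sub>v u) i"
      using i u(1) by (simp add: cm_def scalar_prod_def)
    also have "\<dots> = w * vec_index u i" using eq i u(1) by simp
    finally show "(M *v v) $ a = (w *s v) $ a" using vh i by simp
  qed
  ultimately show ?thesis by blast
qed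

lemma eig_cm:
  assumes h: "bij_betw h {0..<CARD('n)} (UNIV::'n::finite set)"
    and v: "v \<noteq> 0" "(M::complex^'n^'n) *v v = z *s v"
  shows "eigenvalue (cm h M) z"
proof -
  define u where "u = Matrix.vec CARD('n) (\<lambda>i. v $ h i)"
  have "u \<noteq> 0\<^sub>v CARD('n)"
  proof
    assume u0: "u = 0\<^sub>v CARD('n)"
    have "v $ a = 0" for a
    proof -
      obtain i where "i < CARD('n)" "a = h i" using bij_ex[OF h] by blast
      then show ?thesis using arg_cong[OF u0, of "\<lambda>x. vec_index x i"] by (simp add: u_def)
    qed
    then have "v = 0" by (simp add: Finite_Cartesian_Product.vec_eq_iff)
    with v(1) show False by simp
  qed
  moreover have "cm h M *\<^sub>v u = z \<cdot>\<^sub>v u"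
  proof (rule eq_vecI)
    fix i assume "i < dim_vec (z \<cdot>\<^sub>v u)"
    then have i: "i < CARD('n)" by (simp add: u_def)
    have "vec_index (cm h M *\<^sub>v u) i = (\<Sum>l\<in>{0..<CARD('n)}. M $ h i $ h l * v $ h l)"
      using i by (simp add: cm_def scalar_prod_def u_def)
    also have "\<dots> = (\<Sum>b\<in>UNIV. M $ h i $ b * v $ b)"
      by (rule reidx[OF h])
    also have "\<dots> = (M *v v) $ h i" by (simp add: matrix_vector_mult_def)
    also have "\<dots> = z * v $ h i" using v(2) by simp
    finally show "vec_index (cm h M *\<^sub>v u) i = vec_index (z \<cdot>\<^sub>v u) i"
      using i by (simp add: u_def)
  qed (simp add: cm_def u_def)
  moreover have "u \<in> carrier_vec CARD('n)" by (simp add: u_def)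
  ultimately show ?thesis unfolding eigenvalue_def eigenvector_def
    by (intro exI[of _ u]) simp
qed

lemma mpow_scaled:
  fixes A :: "real^'n::finite^'n" and P :: "complex^'n^'n"
  assumes q: "q \<noteq> 0" and P: "\<And>i j. P $ i $ j = complex_of_real (A $ i $ j / q)"
  shows "mpow P k $ a $ b = complex_of_real (mpow A k $ a $ b / q ^ k)"
proof (induction k arbitrary: b)
  case 0
  then show ?case by (simp add: Finite_Cartesian_Product.mat_def)
next
  case (Suc k)
  have "mpow P (Suc k) $ a $ b
      = (\<Sum>l\<in>UNIV. complex_of_real (mpow A k $ a $ l / q ^ k) * complex_of_real (A $ l $ b / q))"
    by (simp add: matrix_matrix_mult_def Suc P)
  also have "\<dots> = complex_of_real ((\<Sum>l\<in>UNIV. mpow A k $ a $ l * A $ l $ b) / q ^ Suc k)"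
    by (simp add: sum_divide_distrib field_simps)
  finally show ?case by (simp add: matrix_matrix_mult_def)
qed

lemma powers_decay:
  fixes A :: "real^'n::finite^'n"
  assumes sr: "spectral_rad A < 1"
  shows "\<exists>c q. 0 < q \<and> q < 1 \<and> (\<forall>k a b. \<bar>mpow A k $ a $ b\<bar> \<le> c * q ^ k)"
proof -
  obtain h where h: "bij_betw h {0..<CARD('n)} (UNIV::'n set)"
    using ex_bij_betw_nat_finite[of "UNIV::'n set"] by auto
  define Ac where "Ac = map_matrix complex_of_real A"
  have "complex_eigenvalues A \<subseteq> spectrum (cm h Ac)"
    unfolding complex_eigenvalues_def spectrum_def Ac_def using eig_cm[OF h] by blast
  then have fin: "finite (complex_eigenvalues A)"
    using card_finite_spectrum(1)[OF cm_carrier] finite_subset by blast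
  define \<rho> where "\<rho> = spectral_rad A"
  have le: "cmod z \<le> \<rho>" if "z \<in> complex_eigenvalues A" for z
    unfolding \<rho>_def spectral_rad_def using fin that by (intro Max_ge) auto
  define q where "q = (1 + max \<rho> 0) / 2"
  have q: "0 < q" "q < 1" "\<rho> < q" using sr by (auto simp: q_def \<rho>_def)
  define P where "P = (\<chi> i j. complex_of_real (A $ i $ j / q))"
  have ev_lt: "cmod w < 1" if "w \<in> spectrum (cm h P)" for w
  proof -
    from that have "eigenvalue (cm h P) w" by (simp add: spectrum_def)
    from cm_eig[OF h this] obtain v where v: "v \<noteq> 0" "P *v v = w *s v" by blast
    have "Ac *v v = (complex_of_real q * w) *s v"
    proof (rule Finite_Cartesian_Product.vec_eq_iff[THEN iffD2, rule_format])
      fix i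
      have "(P *v v) $ i = (Ac *v v) $ i / complex_of_real q"
        by (simp add: P_def Ac_def matrix_vector_mult_def map_matrix_def sum_divide_distrib)
      then show "(Ac *v v) $ i = ((complex_of_real q * w) *s v) $ i"
        using v(2) q by (simp add: field_simps)
    qed
    then have "complex_of_real q * w \<in> complex_eigenvalues A"
      using v(1) unfolding complex_eigenvalues_def Ac_def by blast
    from le[OF this] have "q * cmod w \<le> \<rho>" using q by (simp add: norm_mult)
    with q show ?thesis by (smt (verit) mult_le_cancel_left1)
  qed
  have "spectral_radius (cm h P) \<in> norm ` spectrum (cm h P)"
    by (rule spectral_radius_mem_max(1)[OF cm_carrier]) simp
  then have "spectral_radius (cm h P) < 1" using ev_lt by auto
  from spectral_radius_jnf_norm_bound_less_1_upper_triangular[OF cm_carrier this]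
  obtain c where c: "\<And>k. norm_bound ((cm h P) ^\<^sub>m k) c" by blast
  have "\<bar>mpow A k $ a $ b\<bar> \<le> c * q ^ k" for k a b
  proof -
    obtain i where i: "i < CARD('n)" "a = h i" using bij_ex[OF h] by blast
    obtain j where j: "j < CARD('n)" "b = h j" using bij_ex[OF h] by blast
    have "((cm h P) ^\<^sub>m k) $$ (i,j) = mpow P k $ a $ b"
      unfolding cm_pow[OF h, symmetric] using i j by (simp add: cm_def)
    also have "\<dots> = complex_of_real (mpow A k $ a $ b / q ^ k)"
      by (rule mpow_scaled) (use q in \<open>auto simp: P_def\<close>)
    finally have "cmod (complex_of_real (mpow A k $ a $ b / q ^ k)) \<le> c"
      using c[of k] i j unfolding norm_bound_def by (metis dim_cm pow_mat_dim_square cm_carrier)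
    moreover have "cmod (complex_of_real (mpow A k $ a $ b / q ^ k)) = \<bar>mpow A k $ a $ b\<bar> / q ^ k"
      using q by (subst norm_of_real) (simp add: abs_divide)
    ultimately have "\<bar>mpow A k $ a $ b\<bar> / q ^ k \<le> c" by simp
    then show ?thesis using q by (simp add: field_simps)
  qed
  with q show ?thesis by blast
qed

lemma mat_vec_bound:
  fixes M :: "real^'n::finite^'n"
  assumes "\<And>a b. \<bar>M $ a $ b\<bar> \<le> e"
  shows "norm (M *v v) \<le> real CARD('n) * real CARD('n) * e * norm v"
proof -
  have e0: "0 \<le> e" using assms[of undefined undefined] by (meson abs_ge_zero order_trans)
  have "norm (M *v v) \<le> (\<Sum>a\<in>UNIV. \<bar>(M *v v) $ a\<bar>)" by (rule norm_le_l1_cart)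
  also have "\<dots> \<le> (\<Sum>a\<in>(UNIV::'n set). real CARD('n) * e * norm v)"
  proof (rule sum_mono)
    fix a
    have "\<bar>(M *v v) $ a\<bar> = \<bar>\<Sum>b\<in>UNIV. M $ a $ b * v $ b\<bar>" by (simp add: matrix_vector_mult_def)
    also have "\<dots> \<le> (\<Sum>b\<in>UNIV. \<bar>M $ a $ b * v $ b\<bar>)" by (rule sum_abs)
    also have "\<dots> \<le> (\<Sum>b\<in>(UNIV::'n set). e * norm v)"
    proof (rule sum_mono)
      fix b
      have "\<bar>M $ a $ b * v $ b\<bar> = \<bar>M $ a $ b\<bar> * \<bar>v $ b\<bar>" by (simp add: abs_mult)
      also have "\<dots> \<le> e * norm v"
        by (rule mult_mono) (use assms e0 component_le_norm_cart in auto)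
      finally show "\<bar>M $ a $ b * v $ b\<bar> \<le> e * norm v" .
    qed
    also have "\<dots> = real CARD('n) * e * norm v" by simp
    finally show "\<bar>(M *v v) $ a\<bar> \<le> real CARD('n) * e * norm v" .
  qed
  also have "\<dots> = real CARD('n) * real CARD('n) * e * norm v" by simp
  finally show ?thesis .
qed

lemma contraction_power:
  fixes A :: "real^'n::finite^'n"
  assumes sr: "spectral_rad A < 1"
  shows "\<exists>K D. K > 0 \<and> D \<ge> 0 \<and> (\<forall>k v. norm (mpow A k *v v) \<le> D * norm v)
     \<and> (\<forall>v. norm (mpow A K *v v) \<le> norm v / 2)"
proof -
  obtain c q where q: "0 < q" "q < 1" and c: "\<And>k a b. \<bar>mpow A k $ a $ b\<bar> \<le> c * q ^ k"
    using powers_decay[OF sr] by blast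
  have c0: "c \<ge> 0" using c[of 0 undefined undefined] by (metis abs_ge_zero order_trans power_0 mult_1_right)
  define D where "D = real CARD('n) * real CARD('n) * c"
  have D0: "D \<ge> 0" using c0 by (simp add: D_def)
  have bnd: "norm (mpow A k *v v) \<le> D * q ^ k * norm v" for k v
    using mat_vec_bound[of "mpow A k" "c * q ^ k" v, OF c] by (simp add: D_def mult.assoc)
  have "(\<lambda>k. D * q ^ k) \<longlonglongrightarrow> D * 0"
    by (intro tendsto_mult tendsto_const LIMSEQ_power_zero) (use q in auto)
  then have "eventually (\<lambda>k. D * q ^ k < 1/2) sequentially"
    by (intro order_tendstoD) auto
  then obtain N where N: "\<And>k. k \<ge> N \<Longrightarrow> D * q ^ k < 1/2" by (auto simp: eventually_sequentially)
  have "norm (mpow A (Suc N) *v v) \<le> norm v / 2" for v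
  proof -
    have "norm (mpow A (Suc N) *v v) \<le> D * q ^ Suc N * norm v" by (rule bnd)
    also have "\<dots> \<le> 1/2 * norm v" using N[of "Suc N"] by (intro mult_right_mono) auto
    finally show ?thesis by simp
  qed
  moreover have "norm (mpow A k *v v) \<le> D * norm v" for k v
  proof -
    have "norm (mpow A k *v v) \<le> D * q ^ k * norm v" by (rule bnd)
    also have "\<dots> \<le> D * 1 * norm v" using q D0
      by (intro mult_right_mono mult_left_mono power_le_one) auto
    finally show ?thesis by simp
  qed
  ultimately show ?thesis using D0 by (intro exI[of _ "Suc N"] exI[of _ D]) auto
qed

definition anorm :: "real^'n^'n \<Rightarrow> nat \<Rightarrow> real^'n \<Rightarrow> real" where
  "anorm A K v = (\<Sum>k<K. norm (mpow A k *v v))"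

lemma anorm_add: "anorm A K (u + v) \<le> anorm A K u + anorm A K v"
  unfolding anorm_def sum.distrib[symmetric]
  by (rule sum_mono) (simp add: matrix_vector_right_distrib norm_triangle_ineq)

lemma mvm_minus: "(M::real^'n::finite^'n) *v (- v) = - (M *v v)"
  by (simp add: Finite_Cartesian_Product.vec_eq_iff matrix_vector_mult_def sum_negf)

lemma anorm_minus: "anorm A K (- v) = anorm A K v"
  unfolding anorm_def by (simp add: mvm_minus)

lemma anorm_diff: "anorm A K (u - w) \<le> anorm A K (u - v) + anorm A K (v - w)"
  using anorm_add[of A K "u - v" "v - w"] by simp

lemma anorm_commute: "anorm A K (u - v) = anorm A K (v - u)"
  using anorm_minus[of A K "u - v"] by simp

lemma anorm_nonneg: "anorm A K v \<ge> 0"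
  unfolding anorm_def by (simp add: sum_nonneg)

lemma anorm_ge: assumes "K > 0" shows "norm v \<le> anorm A K v"
proof -
  obtain n where n: "K = Suc n" using assms by (cases K) auto
  have "anorm A K v = norm (mpow A 0 *v v) + (\<Sum>k<n. norm (mpow A (Suc k) *v v))"
    unfolding anorm_def n by (rule sum.lessThan_Suc_shift)
  moreover have "(\<Sum>k<n. norm (mpow A (Suc k) *v v)) \<ge> 0" by (rule sum_nonneg) simp
  ultimately show ?thesis by simp
qed

lemma anorm_cont: "continuous_on S (anorm A K)"
  unfolding anorm_def
  by (intro continuous_intros continuous_on_norm linear_continuous_on
        matrix_vector_mul_linear bounded_linear_intros)

lemma adapted_norm:
  fixes A :: "real^'n::finite^'n"
  assumes sr: "spectral_rad A < 1"
  shows "\<exists>K C \<theta>. K > 0 \<and> C \<ge> 1 \<and> 0 \<le> \<theta> \<and> \<theta> < 1 \<and> (\<forall>v. anorm A K v \<le> C * norm v)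
     \<and> (\<forall>v. anorm A K (A *v v) \<le> \<theta> * anorm A K v)"
proof -
  obtain K D where K: "K > 0" "D \<ge> 0" and D: "\<And>k v. norm (mpow A k *v v) \<le> D * norm v"
    and half: "\<And>v. norm (mpow A K *v v) \<le> norm v / 2"
    using contraction_power[OF sr] by blast
  define C where "C = 1 + real K * D"
  have C1: "C \<ge> 1" using K by (simp add: C_def)
  have up: "anorm A K v \<le> C * norm v" for v
  proof -
    have "anorm A K v \<le> (\<Sum>k<K. D * norm v)" unfolding anorm_def by (rule sum_mono) (rule D)
    also have "\<dots> = real K * D * norm v" by simp
    also have "\<dots> \<le> C * norm v" by (simp add: C_def distrib_right)
    finally show ?thesis .
  qed
  define \<theta> where "\<theta> = 1 - 1 / (2 * C)"
  have th: "0 \<le> \<theta>" "\<theta> < 1" using C1 by (auto simp: \<theta>_def field_simps)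
  have contr: "anorm A K (A *v v) \<le> \<theta> * anorm A K v" for v
  proof -
    have sh: "mpow A k *v (A *v v) = mpow A (Suc k) *v v" for k
      by (simp add: matrix_vector_mul_assoc)
    define g where "g k = norm (mpow A k *v v)" for k
    have e1: "(\<Sum>k<Suc K. g k) = g 0 + (\<Sum>k<K. g (Suc k))" by (rule sum.lessThan_Suc_shift)
    have e2: "(\<Sum>k<Suc K. g k) = (\<Sum>k<K. g k) + g K" by (rule sum.lessThan_Suc)
    have "anorm A K (A *v v) = (\<Sum>k<K. g (Suc k))"
      unfolding anorm_def sh g_def by (rule refl)
    moreover have "g 0 = norm v" by (simp add: g_def)
    moreover have "anorm A K v = (\<Sum>k<K. g k)" by (simp add: anorm_def g_def)
    ultimately have "anorm A K (A *v v) + norm v = anorm A K v + norm (mpow A K *v v)"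
      using e1 e2 by (simp add: g_def)
    then have "anorm A K (A *v v) \<le> anorm A K v - norm v / 2" using half[of v] by simp
    also have "\<dots> \<le> anorm A K v - anorm A K v / (2 * C)"
      using up[of v] C1 by (simp add: field_simps)
    also have "\<dots> = \<theta> * anorm A K v" by (simp add: \<theta>_def algebra_simps)
    finally show ?thesis .
  qed
  show ?thesis using K C1 th up contr by blast
qed

primrec flow :: "(int \<Rightarrow> 'a \<Rightarrow> 'a) \<Rightarrow> int \<Rightarrow> nat \<Rightarrow> 'a \<Rightarrow> 'a" where
  "flow g m 0 x = x"
| "flow g m (Suc j) x = g (m + int j) (flow g m j x)"

lemma flow_shift: "flow g m (Suc j) x = flow g (m + 1) j (g m x)"
  by (induction j) (simp_all add: algebra_simps)

lemma decay_int:
  fixes b :: "int \<Rightarrow> real"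
  assumes th: "0 \<le> \<theta>" "\<theta> < 1"
    and bD: "\<And>n. n \<le> M \<Longrightarrow> b n \<le> D"
    and step: "\<And>n. n < M \<Longrightarrow> b (n + 1) \<le> \<theta> * b n"
    and n: "n \<le> M"
  shows "b n \<le> 0"
proof -
  have "\<forall>n\<le>M. b n \<le> \<theta> ^ j * D" for j
  proof (induction j)
    case 0
    then show ?case using bD by simp
  next
    case (Suc j)
    show ?case
    proof (intro allI impI)
      fix n assume nM: "n \<le> M"
      have "b n = b ((n - 1) + 1)" by simp
      also have "\<dots> \<le> \<theta> * b (n - 1)" using nM by (intro step) simp
      also have "\<dots> \<le> \<theta> * (\<theta> ^ j * D)" using Suc nM th by (intro mult_left_mono) auto
      finally show "b n \<le> \<theta> ^ Suc j * D" by simp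
    qed
  qed
  then have le: "b n \<le> \<theta> ^ j * D" for j using n by blast
  have "(\<lambda>j. \<theta> ^ j * D) \<longlonglongrightarrow> 0 * D"
    by (intro tendsto_mult tendsto_const LIMSEQ_power_zero) (use th in auto)
  then show ?thesis using le by (intro LIMSEQ_le_const[of "\<lambda>j. \<theta> ^ j * D"]) auto
qed

lemma pullback:
  fixes g :: "int \<Rightarrow> 'a::banach \<Rightarrow> 'a" and Nm :: "'a \<Rightarrow> real"
  assumes Nm_add: "\<And>u v. Nm (u + v) \<le> Nm u + Nm v"
    and Nm_minus: "\<And>v. Nm (- v) = Nm v"
    and Nm_ge: "\<And>v. norm v \<le> Nm v"
    and Nm_le: "\<And>v. Nm v \<le> C * norm v"
    and C: "C > 0"
    and Nm_cont: "continuous_on UNIV Nm"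
    and th: "0 \<le> \<theta>" "\<theta> < 1" and \<delta>: "\<delta> > 0"
    and inv: "\<And>n x. n \<le> Nz \<Longrightarrow> Nm (x - p) \<le> \<delta> \<Longrightarrow> Nm (g n x - p) \<le> \<delta>"
    and contr: "\<And>n x y. n \<le> Nz \<Longrightarrow> Nm (x - p) \<le> \<delta> \<Longrightarrow> Nm (y - p) \<le> \<delta> \<Longrightarrow>
                   Nm (g n x - g n y) \<le> \<theta> * Nm (x - y)"
    and gcont: "\<And>n. continuous_on UNIV (g n)"
    and err: "((\<lambda>n. g n p) \<longlongrightarrow> p) at_bot"
  shows "\<exists>!x. (\<forall>n. x (n + 1) = g n (x n)) \<and> (x \<longlongrightarrow> p) at_bot"
proof -
  have Nm0: "Nm 0 = 0" using Nm_ge[of 0] Nm_le[of 0] by simp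
  have Nm_diff: "Nm (u - w) \<le> Nm (u - v) + Nm (v - w)" for u v w
    using Nm_add[of "u - v" "v - w"] by simp
  have Nm_com: "Nm (u - v) = Nm (v - u)" for u v
    using Nm_minus[of "u - v"] by simp
  have p_in: "Nm (p - p) \<le> \<delta>" using Nm0 \<delta> by simp
  have flowB: "Nm (flow g m j x - p) \<le> \<delta> \<and> Nm (flow g m j x - flow g m j y) \<le> \<theta> ^ j * Nm (x - y)"
    if "m + int j \<le> Nz + 1" "Nm (x - p) \<le> \<delta>" "Nm (y - p) \<le> \<delta>" for m j x y
    using that
  proof (induction j arbitrary: x y)
    case 0
    then show ?case by simp
  next
    case (Suc j)
    have IH: "Nm (flow g m j x - p) \<le> \<delta>" "Nm (flow g m j x - flow g m j y) \<le> \<theta> ^ j * Nm (x - y)"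
      using Suc.IH[of x y] Suc.prems by auto
    have IHy: "Nm (flow g m j y - p) \<le> \<delta>"
      using Suc.IH[of y y] Suc.prems by auto
    have mj: "m + int j \<le> Nz" using Suc.prems by simp
    have "Nm (flow g m (Suc j) x - flow g m (Suc j) y) \<le> \<theta> * Nm (flow g m j x - flow g m j y)"
      using contr[OF mj IH(1) IHy] by simp
    also have "\<dots> \<le> \<theta> * (\<theta> ^ j * Nm (x - y))" using IH(2) th by (intro mult_left_mono) auto
    finally show ?case using inv[OF mj IH(1)] by simp
  qed
  define s where "s t i = flow g (t - int i) i p" for t i
  have s_Suc: "s (t + 1) (Suc i) = g t (s t i)" for t i
    by (simp add: s_def)
  have s_step: "norm (s t (Suc i) - s t i) \<le> \<delta> * \<theta> ^ i" if t: "t \<le> Nz" for t i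
  proof -
    have "s t (Suc i) = flow g (t - int i) i (g (t - int (Suc i)) p)"
      unfolding s_def flow_shift by (simp add: algebra_simps)
    moreover have gp: "Nm (g (t - int (Suc i)) p - p) \<le> \<delta>" using inv[OF _ p_in] t by simp
    ultimately have "Nm (s t (Suc i) - s t i) \<le> \<theta> ^ i * Nm (g (t - int (Suc i)) p - p)"
      unfolding s_def using flowB[of "t - int i" i "g (t - int (Suc i)) p" p] t p_in by simp
    also have "\<dots> \<le> \<theta> ^ i * \<delta>" using gp th by (intro mult_left_mono) auto
    finally show ?thesis using Nm_ge[of "s t (Suc i) - s t i"] by (simp add: mult.commute)
  qed
  have s_conv: "convergent (s t)" if t: "t \<le> Nz" for t
  proof -
    define d where "d i = s t (Suc i) - s t i" for i
    have "summable (\<lambda>i. \<delta> * \<theta> ^ i)" using th by (intro summable_mult summable_geometric) auto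
    then have "summable (\<lambda>i. norm (d i))"
      by (rule summable_comparison_test'[where N=0]) (use s_step[OF t] in \<open>simp add: d_def\<close>)
    then have "summable d" by (rule summable_norm_cancel)
    then have "(\<lambda>i. \<Sum>k<i. d k) \<longlonglongrightarrow> suminf d" by (rule summable_LIMSEQ)
    then have "(\<lambda>i. s t 0 + (\<Sum>k<i. d k)) \<longlonglongrightarrow> s t 0 + suminf d" by (intro tendsto_add tendsto_const)
    moreover have "s t 0 + (\<Sum>k<i. d k) = s t i" for i
      unfolding d_def sum_lessThan_telescope by simp
    ultimately show ?thesis unfolding convergent_def by auto
  qed
  define x where "x t = lim (s t)" for t
  have s_lim: "s t \<longlonglongrightarrow> x t" for t
  proof (cases "t \<le> Nz")
    case True
    then show ?thesis using s_conv[OF True] by (simp add: x_def convergent_LIMSEQ_iff)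
  next
    case False
    then have "Nz \<le> t" by simp
    then show ?thesis
    proof (induction t rule: int_ge_induct)
      case base
      then show ?case using s_conv[of Nz] by (simp add: x_def convergent_LIMSEQ_iff)
    next
      case (step t)
      have "(\<lambda>i. g t (s t i)) \<longlonglongrightarrow> g t (x t)"
        using continuous_on_tendsto_compose[OF gcont step.IH] by simp
      then have "(\<lambda>i. s (t + 1) (Suc i)) \<longlonglongrightarrow> g t (x t)" by (simp add: s_Suc)
      then have "s (t + 1) \<longlonglongrightarrow> g t (x t)" by (rule LIMSEQ_imp_Suc)
      then show ?case by (simp add: x_def limI)
    qed
  qed
  have rec: "x (t + 1) = g t (x t)" for t
  proof -
    have "(\<lambda>i. g t (s t i)) \<longlonglongrightarrow> g t (x t)"
      using continuous_on_tendsto_compose[OF gcont s_lim] by simp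
    then have "(\<lambda>i. s (t + 1) (Suc i)) \<longlonglongrightarrow> g t (x t)" by (simp add: s_Suc)
    then have "s (t + 1) \<longlonglongrightarrow> g t (x t)" by (rule LIMSEQ_imp_Suc)
    then show ?thesis using s_lim[of "t + 1"] LIMSEQ_unique by blast
  qed
  have clB: "closed {y. Nm (y - p) \<le> \<delta>}"
  proof -
    have "continuous_on UNIV (\<lambda>y. Nm (y - p))"
      by (rule continuous_on_compose2[OF Nm_cont]) (auto intro!: continuous_intros)
    then show ?thesis by (intro closed_Collect_le) (auto intro: continuous_intros)
  qed
  have xB: "Nm (x t - p) \<le> \<delta>" if t: "t \<le> Nz" for t
  proof -
    have "\<forall>i. s t i \<in> {y. Nm (y - p) \<le> \<delta>}"
      using flowB[of "t - int _" _ p p] t p_in by (simp add: s_def)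
    then show ?thesis using Lim_in_closed_set[OF clB _ _ s_lim[of t]] by auto
  qed
  have xlim: "(x \<longlongrightarrow> p) at_bot"
  proof (rule tendstoI)
    fix \<epsilon> :: real assume \<epsilon>: "\<epsilon> > 0"
    define \<eta> where "\<eta> = \<epsilon> * (1 - \<theta>) / 2"
    have \<eta>: "\<eta> > 0" using \<epsilon> th by (simp add: \<eta>_def)
    have "eventually (\<lambda>n. dist (g n p) p < \<eta> / C) at_bot"
      using tendstoD[OF err] \<eta> C by simp
    then obtain M0 where M0: "\<And>n. n \<le> M0 \<Longrightarrow> norm (g n p - p) < \<eta> / C"
      by (auto simp: eventually_at_bot_linorder dist_norm)
    define M where "M = min M0 Nz"
    have errM: "Nm (g n p - p) \<le> \<eta>" if "n \<le> M" for n
    proof -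
      have "Nm (g n p - p) \<le> C * norm (g n p - p)" by (rule Nm_le)
      also have "\<dots> \<le> C * (\<eta> / C)" using M0[of n] that C by (intro mult_left_mono) (auto simp: M_def)
      finally show ?thesis using C by simp
    qed
    have bound: "Nm (x n - p) - \<epsilon> / 2 \<le> 0" if "n \<le> M" for n
    proof (rule decay_int[OF th, where M = M and D = \<delta>])
      fix n assume "n \<le> M"
      then show "Nm (x n - p) - \<epsilon> / 2 \<le> \<delta>" using xB[of n] \<epsilon> by (auto simp: M_def)
    next
      fix n assume n: "n < M"
      have "Nm (x (n + 1) - p) \<le> Nm (g n (x n) - g n p) + Nm (g n p - p)"
        unfolding rec by (rule Nm_diff)
      also have "\<dots> \<le> \<theta> * Nm (x n - p) + \<eta>"
        using contr[of n "x n" p] xB[of n] errM[of n] n p_in by (intro add_mono) (auto simp: M_def)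
      finally show "Nm (x (n + 1) - p) - \<epsilon> / 2 \<le> \<theta> * (Nm (x n - p) - \<epsilon> / 2)"
        by (simp add: \<eta>_def field_simps)
    qed (use that in simp)
    have "dist (x n) p < \<epsilon>" if "n \<le> M" for n
      using bound[OF that] Nm_ge[of "x n - p"] \<epsilon> by (simp add: dist_norm)
    then show "eventually (\<lambda>n. dist (x n) p < \<epsilon>) at_bot"
      by (auto simp: eventually_at_bot_linorder)
  qed
  have uniq: "y = x" if y: "\<forall>n. y (n + 1) = g n (y n)" "(y \<longlongrightarrow> p) at_bot" for y
  proof -
    have "eventually (\<lambda>n. dist (y n) p < \<delta> / C) at_bot"
      using tendstoD[OF y(2)] \<delta> C by simp
    then obtain M0 where M0: "\<And>n. n \<le> M0 \<Longrightarrow> norm (y n - p) < \<delta> / C"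
      by (auto simp: eventually_at_bot_linorder dist_norm)
    define M where "M = min M0 Nz"
    have yB: "Nm (y n - p) \<le> \<delta>" if "n \<le> M" for n
    proof -
      have "Nm (y n - p) \<le> C * norm (y n - p)" by (rule Nm_le)
      also have "\<dots> \<le> C * (\<delta> / C)" using M0[of n] that C by (intro mult_left_mono) (auto simp: M_def)
      finally show ?thesis using C by simp
    qed
    have eqM: "y n = x n" if "n \<le> M" for n
    proof -
      have "Nm (y n - x n) \<le> 0"
      proof (rule decay_int[OF th, where M = M and D = "2 * \<delta>"])
        fix n assume n: "n \<le> M"
        have "Nm (y n - x n) \<le> Nm (y n - p) + Nm (p - x n)" by (rule Nm_diff)
        also have "\<dots> \<le> 2 * \<delta>" using yB[OF n] xB[of n] n Nm_com[of p "x n"] by (simp add: M_def)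
        finally show "Nm (y n - x n) \<le> 2 * \<delta>" .
      next
        fix n assume n: "n < M"
        show "Nm (y (n + 1) - x (n + 1)) \<le> \<theta> * Nm (y n - x n)"
          unfolding rec y(1)[rule_format] using contr[of n "y n" "x n"] yB[of n] xB[of n] n
          by (simp add: M_def)
      qed (use that in simp)
      then have "norm (y n - x n) \<le> 0" using Nm_ge[of "y n - x n"] by linarith
      then show ?thesis by simp
    qed
    have "y n = x n" for n
    proof (cases "n \<le> M")
      case True
      then show ?thesis by (rule eqM)
    next
      case False
      then have "M \<le> n" by simp
      then show ?thesis
      proof (induction n rule: int_ge_induct)
        case base
        then show ?case by (rule eqM) simp
      next
        case (step n)
        then show ?case using rec[of n] y(1) by simp
      qed
    qed
    then show ?thesis by auto
  qed
  show ?thesis using rec xlim uniq by blast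
qed


lemma A_apply:
  fixes F :: "((real^'l) \<times> (real^'m)) \<Rightarrow>\<^sub>L (real^'l)"
  shows "matrix (\<lambda>v. blinfun_apply F (v, 0)) *v v = blinfun_apply F (v, 0)"
proof -
  have "bounded_linear (\<lambda>v::real^'l. blinfun_apply F (v, 0))"
    by (intro bounded_linear_compose[OF blinfun.bounded_linear_right] bounded_linear_Pair
        bounded_linear_ident bounded_linear_zero)
  from matrix_vector_mul(3)[OF this] show ?thesis by (metis)
qed

lemma lin_est:
  fixes f :: "(real^'l) \<times> (real^'m) \<Rightarrow> real^'l"
    and f' :: "(real^'l) \<times> (real^'m) \<Rightarrow> ((real^'l) \<times> (real^'m)) \<Rightarrow>\<^sub>L (real^'l)"
  assumes f_deriv: "\<And>z. (f has_derivative blinfun_apply (f' z)) (at z)"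
    and f'_cont: "continuous_on UNIV f'"
    and \<epsilon>: "\<epsilon> > 0"
  shows "\<exists>\<eta>>0. \<forall>x y l. norm (x - x0) < \<eta> \<longrightarrow> norm (y - x0) < \<eta> \<longrightarrow> norm (l - l0) < \<eta> \<longrightarrow>
           norm (f (x, l) - f (y, l) - Dx f' (x0, l0) *v (x - y)) \<le> \<epsilon> * norm (x - y)"
proof -
  obtain \<eta>' where \<eta>': "\<eta>' > 0" and cont: "\<And>z. dist z (x0, l0) < \<eta>' \<Longrightarrow> dist (f' z) (f' (x0, l0)) < \<epsilon>"
    using f'_cont \<epsilon> unfolding continuous_on_iff by (metis UNIV_I)
  define \<eta> where "\<eta> = \<eta>' / 2"
  define A where "A = Dx f' (x0, l0)"
  have Aeq: "A *v v = blinfun_apply (f' (x0, l0)) (v, 0)" for v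
    unfolding A_def Dx_def by (rule A_apply)
  have "\<forall>x y l. norm (x - x0) < \<eta> \<longrightarrow> norm (y - x0) < \<eta> \<longrightarrow> norm (l - l0) < \<eta> \<longrightarrow>
           norm (f (x, l) - f (y, l) - A *v (x - y)) \<le> \<epsilon> * norm (x - y)"
  proof (intro allI impI)
    fix x y l assume x: "norm (x - x0) < \<eta>" and y: "norm (y - x0) < \<eta>" and l: "norm (l - l0) < \<eta>"
    define \<phi> where "\<phi> w = f (w, l) - A *v w" for w
    define S where "S = ball x0 \<eta>"
    have der: "(\<phi> has_derivative (\<lambda>v. blinfun_apply (f' (w, l)) (v, 0) - A *v v)) (at w within S)" for w
    proof -
      have "((\<lambda>w. (w, l)) has_derivative (\<lambda>v. (v, 0))) (at w within S)"
        by (intro has_derivative_Pair has_derivative_ident has_derivative_const)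
      from has_derivative_compose[OF this f_deriv]
      have "((\<lambda>w. f (w, l)) has_derivative (\<lambda>v. blinfun_apply (f' (w, l)) (v, 0))) (at w within S)" .
      moreover have "((\<lambda>w. A *v w) has_derivative (\<lambda>v. A *v v)) (at w within S)"
        by (rule bounded_linear_imp_has_derivative[OF matrix_vector_mul_bounded_linear])
      ultimately show ?thesis unfolding \<phi>_def by (rule has_derivative_diff)
    qed
    have onb: "onorm (\<lambda>v. blinfun_apply (f' (w, l)) (v, 0) - A *v v) \<le> \<epsilon>" if w: "w \<in> S" for w
    proof (rule onorm_le)
      fix v
      have "dist (w, l) (x0, l0) \<le> norm (w - x0) + norm (l - l0)"
        using norm_Pair_le[of "w - x0" "l - l0"] by (simp add: dist_norm)
      also have "\<dots> < \<eta>'" using w l by (simp add: S_def \<eta>_def dist_norm norm_minus_commute)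
      finally have "norm (f' (w, l) - f' (x0, l0)) < \<epsilon>" using cont by (simp add: dist_norm)
      have "blinfun_apply (f' (w, l)) (v, 0) - A *v v = blinfun_apply (f' (w, l) - f' (x0, l0)) (v, 0)"
        by (simp add: Aeq minus_blinfun.rep_eq)
      also have "norm \<dots> \<le> norm (f' (w, l) - f' (x0, l0)) * norm (v, 0::real^'m)" by (rule norm_blinfun)
      also have "\<dots> = norm (f' (w, l) - f' (x0, l0)) * norm v" by (simp add: norm_Pair)
      also have "\<dots> \<le> \<epsilon> * norm v"
        using \<open>norm (f' (w, l) - f' (x0, l0)) < \<epsilon>\<close> by (intro mult_right_mono) auto
      finally show "norm (blinfun_apply (f' (w, l)) (v, 0) - A *v v) \<le> \<epsilon> * norm v" .
    qed
    have "norm (\<phi> x - \<phi> y) \<le> \<epsilon> * norm (x - y)"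
      by (rule differentiable_bound[of S, OF _ der onb])
         (use x y in \<open>auto simp: S_def dist_norm norm_minus_commute\<close>)
    then show "norm (f (x, l) - f (y, l) - A *v (x - y)) \<le> \<epsilon> * norm (x - y)"
      by (simp add: \<phi>_def matrix_vector_mult_diff_distrib algebra_simps)
  qed
  then show ?thesis using \<eta>' unfolding A_def \<eta>_def by (intro exI[of _ "\<eta>' / 2"]) auto
qed

theorem mainTheorem1:
  fixes f :: "(real^'l) \<times> (real^'m) \<Rightarrow> real^'l"
    and f' :: "(real^'l) \<times> (real^'m) \<Rightarrow> ((real^'l) \<times> (real^'m)) \<Rightarrow>\<^sub>L (real^'l)"
    and \<Lambda> :: "real \<Rightarrow> real^'m"
    and lm lp :: "real^'m"
    and X :: "real \<Rightarrow> real^'l"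
    and Xm Xp :: "real^'l"
  assumes f_deriv: "\<And>z. (f has_derivative blinfun_apply (f' z)) (at z)"
    and f'_cont: "continuous_on UNIV f'"
    and shift: "parameter_shift \<Lambda> lm lp"
    and path: "stable_path f f' \<Lambda> lm lp X Xm Xp"
  shows "\<forall>r>0. \<exists>!x :: int \<Rightarrow> real^'l.
           (\<forall>n. x (n + 1) = f (x n, \<Lambda> (r * of_int n))) \<and> (x \<longlongrightarrow> Xm) at_bot"
proof (intro allI impI)
  fix r :: real assume r: "r > 0"
  have fix_m: "f (Xm, lm) = Xm" and sr: "spectral_rad (Dx f' (Xm, lm)) < 1"
    using path unfolding stable_path_def by auto
  have Llim: "(\<Lambda> \<longlongrightarrow> lm) at_bot" using shift unfolding parameter_shift_def by auto
  define A where "A = Dx f' (Xm, lm)"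
  obtain K C \<theta>0 where K: "K > 0" and C: "C \<ge> 1" and th0: "0 \<le> \<theta>0" "\<theta>0 < 1"
    and up: "\<And>v. anorm A K v \<le> C * norm v" and contrA: "\<And>v. anorm A K (A *v v) \<le> \<theta>0 * anorm A K v"
    using adapted_norm[OF sr[folded A_def]] by blast
  define Nm where "Nm = anorm A K"
  have Nm_ge: "norm v \<le> Nm v" for v unfolding Nm_def by (rule anorm_ge[OF K])
  define \<epsilon> where "\<epsilon> = (1 - \<theta>0) / (2 * C)"
  have \<epsilon>: "\<epsilon> > 0" using th0 C by (simp add: \<epsilon>_def)
  define \<theta> where "\<theta> = (1 + \<theta>0) / 2"
  have th: "0 \<le> \<theta>" "\<theta> < 1" using th0 by (auto simp: \<theta>_def)
  obtain \<eta> where \<eta>: "\<eta> > 0" and est: "\<And>x y l. norm (x - Xm) < \<eta> \<Longrightarrow> norm (y - Xm) < \<eta> \<Longrightarrow> norm (l - lm) < \<eta> \<Longrightarrow>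
           norm (f (x, l) - f (y, l) - A *v (x - y)) \<le> \<epsilon> * norm (x - y)"
    using lin_est[OF f_deriv f'_cont \<epsilon>, of Xm lm] unfolding A_def by blast
  define \<delta> where "\<delta> = \<eta> / 2"
  have \<delta>: "\<delta> > 0" "\<delta> < \<eta>" using \<eta> by (auto simp: \<delta>_def)
  define g where "g n x = f (x, \<Lambda> (r * of_int n))" for n x
  have fcont: "isCont f z" for z
    using has_derivative_continuous[OF f_deriv] by simp
  have rlim: "filterlim (\<lambda>n::int. r * real_of_int n) at_bot at_bot"
    by (rule filterlim_tendsto_pos_mult_at_bot[OF tendsto_const r filterlim_real_of_int_at_bot])
  have Llim': "((\<lambda>n::int. \<Lambda> (r * of_int n)) \<longlongrightarrow> lm) at_bot"
    by (rule filterlim_compose[OF Llim rlim])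
  have err: "((\<lambda>n. g n Xm) \<longlongrightarrow> Xm) at_bot"
  proof -
    have "((\<lambda>n::int. (Xm, \<Lambda> (r * of_int n))) \<longlongrightarrow> (Xm, lm)) at_bot"
      by (intro tendsto_Pair tendsto_const Llim')
    from isCont_tendsto_compose[OF fcont this] show ?thesis by (simp add: g_def fix_m)
  qed
  have ev1: "eventually (\<lambda>n. dist (\<Lambda> (r * of_int n)) lm < \<eta>) at_bot"
    using tendstoD[OF Llim' \<eta>] .
  have ev2: "eventually (\<lambda>n. dist (g n Xm) Xm < (1 - \<theta>) * \<delta> / C) at_bot"
    using tendstoD[OF err] th \<delta> C by simp
  obtain N0 where N0: "\<And>n. n \<le> N0 \<Longrightarrow> norm (\<Lambda> (r * of_int n) - lm) < \<eta> \<and> norm (g n Xm - Xm) < (1 - \<theta>) * \<delta> / C"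
    using eventually_conj[OF ev1 ev2] by (auto simp: eventually_at_bot_linorder dist_norm)
  have contr: "Nm (g n x - g n y) \<le> \<theta> * Nm (x - y)"
    if n: "n \<le> N0" and x: "Nm (x - Xm) \<le> \<delta>" and y: "Nm (y - Xm) \<le> \<delta>" for n x y
  proof -
    define E where "E = g n x - g n y - A *v (x - y)"
    have "norm E \<le> \<epsilon> * norm (x - y)"
      unfolding E_def g_def
      by (rule est) (use N0[OF n] Nm_ge[of "x - Xm"] Nm_ge[of "y - Xm"] x y \<delta> in auto)
    have "Nm (g n x - g n y) = Nm (A *v (x - y) + E)" by (simp add: E_def)
    also have "\<dots> \<le> Nm (A *v (x - y)) + Nm E" unfolding Nm_def by (rule anorm_add)
    also have "\<dots> \<le> \<theta>0 * Nm (x - y) + C * (\<epsilon> * norm (x - y))"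
      using contrA[of "x - y"] up[of E] \<open>norm E \<le> \<epsilon> * norm (x - y)\<close> C
      by (intro add_mono) (auto simp: Nm_def intro: order_trans mult_left_mono)
    also have "\<dots> \<le> \<theta>0 * Nm (x - y) + C * (\<epsilon> * Nm (x - y))"
      using Nm_ge[of "x - y"] C \<epsilon> by (intro add_left_mono mult_left_mono) auto
    also have "\<dots> = \<theta> * Nm (x - y)" using C by (simp add: \<epsilon>_def \<theta>_def field_simps)
    finally show ?thesis .
  qed
  have Nm0: "Nm 0 = 0" using Nm_ge[of 0] up[of 0] by (simp add: Nm_def)
  have inv: "Nm (g n x - Xm) \<le> \<delta>" if n: "n \<le> N0" and x: "Nm (x - Xm) \<le> \<delta>" for n x
  proof -
    have "Nm (g n x - Xm) \<le> Nm (g n x - g n Xm) + Nm (g n Xm - Xm)"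
      using anorm_diff unfolding Nm_def by blast
    also have "\<dots> \<le> \<theta> * \<delta> + C * norm (g n Xm - Xm)"
    proof (rule add_mono)
      have "Nm (g n x - g n Xm) \<le> \<theta> * Nm (x - Xm)" using contr[OF n x, of Xm] Nm0 \<delta> by simp
      also have "\<dots> \<le> \<theta> * \<delta>" using th x by (intro mult_left_mono) auto
      finally show "Nm (g n x - g n Xm) \<le> \<theta> * \<delta>" .
      show "Nm (g n Xm - Xm) \<le> C * norm (g n Xm - Xm)" unfolding Nm_def by (rule up)
    qed
    also have "\<dots> \<le> \<theta> * \<delta> + C * ((1 - \<theta>) * \<delta> / C)"
      using N0[OF n] C by (intro add_left_mono mult_left_mono) auto
    also have "\<dots> = \<delta>" using C by (simp add: field_simps)
    finally show ?thesis .
  qed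
  have gcont: "continuous_on UNIV (g n)" for n
    unfolding g_def
    by (intro continuous_at_imp_continuous_on ballI continuous_on_compose2[OF _ continuous_on_Pair])
       (auto intro!: continuous_intros continuous_at_imp_continuous_on fcont)
  have "\<exists>!x. (\<forall>n. x (n + 1) = g n (x n)) \<and> (x \<longlongrightarrow> Xm) at_bot"
  proof (rule pullback[where Nm = Nm and C = C and \<theta> = \<theta> and \<delta> = \<delta> and Nz = N0])
    show "Nm (u + v) \<le> Nm u + Nm v" for u v unfolding Nm_def by (rule anorm_add)
    show "Nm (- v) = Nm v" for v unfolding Nm_def by (rule anorm_minus)
    show "continuous_on UNIV Nm" unfolding Nm_def by (rule anorm_cont)
    show "Nm v \<le> C * norm v" for v unfolding Nm_def by (rule up)
  qed (use Nm_ge C th \<delta> inv contr gcont err in auto)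
  then show "\<exists>!x :: int \<Rightarrow> real^'l. (\<forall>n. x (n + 1) = f (x n, \<Lambda> (r * of_int n))) \<and> (x \<longlongrightarrow> Xm) at_bot"
    by (simp add: g_def)
qed

end
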